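(* Let $(A;R)\in\mathcal C$ and work in $PG(A;R)$. Let $A_1,A_2,C$ be closed sets with $d(A_1\cup A_2)=d(A_1)+d(A_2)-d(A_1\cap A_2)$. Then $$d((A_1\cap C)\cup(A_2\cap C))=d(A_1\cap C)+d(A_2\cap C)-d(A_1\cap A_2\cap C).$$
   Context: A set system is a pair $(A;R)$ where $R$ is a set of finite non-empty subsets of $A$; for $X\subseteq A$, $R[X]=\{r\in R:r\subseteq X\}$ and $\delta(X)=|X|-|R[X]|$. $\mathcal C$ is the class of finite set systems with $\delta(X)\ge0$ for all $X\subseteq A$. $d(X)=\min\{\delta(Y):X\subseteq Y\subseteq A\}$, $\mathrm{cl}(X)=\{y:d(X\cup\{y\})=d(X)\}$, and $PG(A;R)$ is the matroid $(A,\mathrm{cl})$ with rank function $d$; closed sets are $F$ with $\mathrm{cl}(F)=F$. *)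

theory Defs
  imports Main
begin

definition set_system :: "'a set \<Rightarrow> 'a set set \<Rightarrow> bool" where
  "set_system A R \<longleftrightarrow> (\<forall>r\<in>R. finite r \<and> r \<noteq> {} \<and> r \<subseteq> A)"

definition Rof :: "'a set set \<Rightarrow> 'a set \<Rightarrow> 'a set set" where
  "Rof R X = {r \<in> R. r \<subseteq> X}"

definition delta :: "'a set set \<Rightarrow> 'a set \<Rightarrow> int" where
  "delta R X = int (card X) - int (card (Rof R X))"

definition classC :: "'a set \<Rightarrow> 'a set set \<Rightarrow> bool" where
  "classC A R \<longleftrightarrow> set_system A R \<and> finite A \<and> finite R \<and>
     (\<forall>X. X \<subseteq> A \<longrightarrow> delta R X \<ge> 0)"

definition dd :: "'a set \<Rightarrow> 'a set set \<Rightarrow> 'a set \<Rightarrow> int" where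
  "dd A R X = Min {delta R Y | Y. X \<subseteq> Y \<and> Y \<subseteq> A}"

definition cl :: "'a set \<Rightarrow> 'a set set \<Rightarrow> 'a set \<Rightarrow> 'a set" where
  "cl A R X = {y \<in> A. dd A R (X \<union> {y}) = dd A R X}"

definition closed_set :: "'a set \<Rightarrow> 'a set set \<Rightarrow> 'a set \<Rightarrow> bool" where
  "closed_set A R F \<longleftrightarrow> F \<subseteq> A \<and> cl A R F = F"

end

theory Submission
  imports Defs
begin

lemma Rof_Int: "Rof R P \<inter> Rof R Q = Rof R (P \<inter> Q)"
  unfolding Rof_def by auto

lemma Rof_Un_sub: "Rof R P \<union> Rof R Q \<subseteq> Rof R (P \<union> Q)"
  unfolding Rof_def by auto

lemma Rof_fin: "finite R \<Longrightarrow> finite (Rof R P)"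
  unfolding Rof_def by auto

lemma card_Rof_eq:
  assumes "finite R"
  shows "card (Rof R P) + card (Rof R Q) = card (Rof R P \<union> Rof R Q) + card (Rof R (P \<inter> Q))"
  using card_Un_Int[OF Rof_fin[OF assms] Rof_fin[OF assms]] Rof_Int by metis

lemma delta_submod:
  assumes "finite R" "finite P" "finite Q"
  shows "delta R (P \<union> Q) + delta R (P \<inter> Q) \<le> delta R P + delta R Q"
proof -
  have c1: "card P + card Q = card (P \<union> Q) + card (P \<inter> Q)"
    using card_Un_Int assms by blast
  have "card (Rof R P \<union> Rof R Q) \<le> card (Rof R (P \<union> Q))"
    by (rule card_mono[OF Rof_fin[OF assms(1)] Rof_Un_sub])
  then show ?thesis using c1 card_Rof_eq[OF assms(1), of P Q] unfolding delta_def by linarith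
qed

lemma delta_mod:
  assumes "finite R" "finite P" "finite Q"
    and "\<And>r. r \<in> R \<Longrightarrow> r \<subseteq> P \<union> Q \<Longrightarrow> r \<subseteq> P \<or> r \<subseteq> Q"
  shows "delta R (P \<union> Q) + delta R (P \<inter> Q) = delta R P + delta R Q"
proof -
  have c1: "card P + card Q = card (P \<union> Q) + card (P \<inter> Q)"
    using card_Un_Int assms by blast
  have "Rof R (P \<union> Q) = Rof R P \<union> Rof R Q" using assms(4) unfolding Rof_def by auto
  then show ?thesis using c1 card_Rof_eq[OF assms(1), of P Q] unfolding delta_def by simp
qed

lemma dd_fin_ne:
  assumes "finite A" "X \<subseteq> A"
  shows "finite {delta R Y | Y. X \<subseteq> Y \<and> Y \<subseteq> A}" "{delta R Y | Y. X \<subseteq> Y \<and> Y \<subseteq> A} \<noteq> {}"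
proof -
  have "{delta R Y | Y. X \<subseteq> Y \<and> Y \<subseteq> A} \<subseteq> delta R ` Pow A" by auto
  then show "finite {delta R Y | Y. X \<subseteq> Y \<and> Y \<subseteq> A}" using assms finite_subset by blast
  show "{delta R Y | Y. X \<subseteq> Y \<and> Y \<subseteq> A} \<noteq> {}" using assms by auto
qed

lemma dd_le:
  assumes "finite A" "X \<subseteq> Y" "Y \<subseteq> A"
  shows "dd A R X \<le> delta R Y"
  unfolding dd_def using dd_fin_ne[of A X R] assms by (intro Min_le) auto

lemma dd_attained:
  assumes "finite A" "X \<subseteq> A"
  obtains Y where "X \<subseteq> Y" "Y \<subseteq> A" "dd A R X = delta R Y"
proof -
  have "dd A R X \<in> {delta R Y | Y. X \<subseteq> Y \<and> Y \<subseteq> A}"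
    unfolding dd_def using dd_fin_ne[OF assms, of R] by (rule Min_in)
  then show ?thesis using that by auto
qed

lemma dd_mono:
  assumes "finite A" "X \<subseteq> X'" "X' \<subseteq> A"
  shows "dd A R X \<le> dd A R X'"
proof -
  obtain Y where "X' \<subseteq> Y" "Y \<subseteq> A" "dd A R X' = delta R Y"
    using dd_attained assms by blast
  then show ?thesis using dd_le[of A X Y R] assms by auto
qed

definition strong :: "'a set \<Rightarrow> 'a set set \<Rightarrow> 'a set \<Rightarrow> bool" where
  "strong A R F \<longleftrightarrow> F \<subseteq> A \<and> (\<forall>Y. F \<subset> Y \<longrightarrow> Y \<subseteq> A \<longrightarrow> delta R F < delta R Y)"

definition weakm :: "'a set \<Rightarrow> 'a set set \<Rightarrow> 'a set \<Rightarrow> bool" where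
  "weakm A R F \<longleftrightarrow> F \<subseteq> A \<and> (\<forall>Y. F \<subseteq> Y \<longrightarrow> Y \<subseteq> A \<longrightarrow> delta R F \<le> delta R Y)"

lemma strong_weakm:
  assumes "strong A R F" shows "weakm A R F"
proof -
  have FA: "F \<subseteq> A" and st: "\<And>Y. F \<subset> Y \<Longrightarrow> Y \<subseteq> A \<Longrightarrow> delta R F < delta R Y"
    using assms unfolding strong_def by auto
  have "delta R F \<le> delta R Y" if "F \<subseteq> Y" "Y \<subseteq> A" for Y
  proof (cases "Y = F")
    case False
    then have "F \<subset> Y" using that(1) by blast
    then show ?thesis using st that(2) by (simp add: order_less_imp_le)
  qed simp
  then show ?thesis unfolding weakm_def using FA by blast
qed

lemma weakm_dd:
  assumes "finite A" "weakm A R F"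
  shows "dd A R F = delta R F"
proof -
  have FA: "F \<subseteq> A" using assms(2) unfolding weakm_def by blast
  obtain Y where Y: "F \<subseteq> Y" "Y \<subseteq> A" "dd A R F = delta R Y"
    using dd_attained[OF assms(1) FA] by blast
  have "delta R F \<le> delta R Y" using assms(2) Y unfolding weakm_def by blast
  moreover have "dd A R F \<le> delta R F" using dd_le[OF assms(1) _ FA] by simp
  ultimately show ?thesis using Y by simp
qed

lemma closed_strong:
  assumes "finite A" "closed_set A R F"
  shows "strong A R F"
proof -
  have FA: "F \<subseteq> A" and clF: "cl A R F = F" using assms unfolding closed_set_def by auto
  have key: "y \<in> F" if "y \<in> A" "dd A R (F \<union> {y}) \<le> dd A R F" for y
  proof -
    have "dd A R F \<le> dd A R (F \<union> {y})" using dd_mono[OF assms(1), of F "F \<union> {y}" R] FA that by auto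
    then have "dd A R (F \<union> {y}) = dd A R F" using that(2) by linarith
    then have "y \<in> cl A R F" using that unfolding cl_def by auto
    then show ?thesis using clF by simp
  qed
  obtain Y0 where Y0: "F \<subseteq> Y0" "Y0 \<subseteq> A" "dd A R F = delta R Y0"
    using dd_attained[OF assms(1) FA] by blast
  have "Y0 = F"
  proof (rule ccontr)
    assume "Y0 \<noteq> F"
    then obtain y where y: "y \<in> Y0" "y \<notin> F" using Y0 by blast
    have "F \<union> {y} \<subseteq> Y0" using Y0 y by blast
    then have "dd A R (F \<union> {y}) \<le> delta R Y0" using dd_le[OF assms(1) _ Y0(2)] by blast
    then have "dd A R (F \<union> {y}) \<le> dd A R F" using Y0(3) by simp
    moreover have "y \<in> A" using Y0 y by blast
    ultimately show False using key y(2) by blast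
  qed
  then have ddF: "dd A R F = delta R F" using Y0 by simp
  show ?thesis unfolding strong_def
  proof (intro conjI allI impI FA)
    fix Y assume Y: "F \<subset> Y" "Y \<subseteq> A"
    then obtain y where y: "y \<in> Y" "y \<notin> F" by blast
    have "F \<union> {y} \<subseteq> Y" using Y y by blast
    then have "dd A R (F \<union> {y}) \<le> delta R Y" using dd_le[OF assms(1) _ Y(2)] by blast
    show "delta R F < delta R Y"
    proof (rule ccontr)
      assume "\<not> delta R F < delta R Y"
      then have "dd A R (F \<union> {y}) \<le> dd A R F" using \<open>dd A R (F \<union> {y}) \<le> delta R Y\<close> ddF by linarith
      moreover have "y \<in> A" using Y y by blast
      ultimately show False using key y(2) by blast
    qed
  qed
qed

lemma weakm_cut:
  assumes "finite A" "finite R" "weakm A R F" "S \<subseteq> A"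
  shows "delta R (S \<inter> F) + (delta R (S \<union> F) - delta R F) \<le> delta R S"
    "delta R (S \<union> F) \<ge> delta R F"
proof -
  have FA: "F \<subseteq> A" using assms(3) unfolding weakm_def by blast
  have "F \<subseteq> S \<union> F" "S \<union> F \<subseteq> A" using assms(4) FA by auto
  then show "delta R (S \<union> F) \<ge> delta R F" using assms(3) unfolding weakm_def by blast
  have "finite S" "finite F" using finite_subset[OF assms(4) assms(1)] finite_subset[OF FA assms(1)] by auto
  then show "delta R (S \<inter> F) + (delta R (S \<union> F) - delta R F) \<le> delta R S"
    using delta_submod[OF assms(2), of S F] by linarith
qed

lemma strong_Int:
  assumes "finite A" "finite R" "strong A R F" "strong A R G"
  shows "strong A R (F \<inter> G)"
proof -
  have FA: "F \<subseteq> A" and sF: "\<And>Y. F \<subset> Y \<Longrightarrow> Y \<subseteq> A \<Longrightarrow> delta R F < delta R Y"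
    using assms(3) unfolding strong_def by auto
  have GA: "G \<subseteq> A" and sG: "\<And>Y. G \<subset> Y \<Longrightarrow> Y \<subseteq> A \<Longrightarrow> delta R G < delta R Y"
    using assms(4) unfolding strong_def by auto
  have wF: "weakm A R F" using strong_weakm[OF assms(3)] .
  have wG: "weakm A R G" using strong_weakm[OF assms(4)] .
  have "delta R (F \<inter> G) < delta R Y" if Y: "F \<inter> G \<subset> Y" "Y \<subseteq> A" for Y
  proof -
    note a = weakm_cut[OF assms(1,2) wF Y(2)]
    have YF: "Y \<inter> F \<subseteq> A" using Y by blast
    have e: "Y \<inter> F \<inter> G = F \<inter> G" using Y by blast
    note b = weakm_cut[OF assms(1,2) wG YF, unfolded e]
    show ?thesis
    proof (cases "Y \<subseteq> F")
      case True
      then have "G \<subset> Y \<inter> F \<union> G" using Y by blast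
      moreover have "Y \<inter> F \<union> G \<subseteq> A" using YF GA by blast
      ultimately have "delta R (Y \<inter> F \<union> G) > delta R G" using sG by blast
      then show ?thesis using a b by linarith
    next
      case False
      then have "F \<subset> Y \<union> F" by blast
      moreover have "Y \<union> F \<subseteq> A" using Y(2) FA by blast
      ultimately have "delta R (Y \<union> F) > delta R F" using sF by blast
      then show ?thesis using a b by linarith
    qed
  qed
  moreover have "F \<inter> G \<subseteq> A" using FA by blast
  ultimately show ?thesis unfolding strong_def by blast
qed

theorem lemma6p3:
  fixes A :: "'a set" and R :: "'a set set" and A1 A2 C :: "'a set"
  assumes "classC A R"
    and "closed_set A R A1" and "closed_set A R A2" and "closed_set A R C"
    and "dd A R (A1 \<union> A2) = dd A R A1 + dd A R A2 - dd A R (A1 \<inter> A2)"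
  shows "dd A R ((A1 \<inter> C) \<union> (A2 \<inter> C))
           = dd A R (A1 \<inter> C) + dd A R (A2 \<inter> C) - dd A R (A1 \<inter> A2 \<inter> C)"
proof -
  have fA: "finite A" and fR: "finite R" using assms(1) unfolding classC_def by auto
  have s1: "strong A R A1" and s2: "strong A R A2" and sC: "strong A R C"
    using closed_strong[OF fA] assms(2-4) by auto
  have A1A: "A1 \<subseteq> A" and A2A: "A2 \<subseteq> A" and CA: "C \<subseteq> A"
    using s1 s2 sC unfolding strong_def by auto
  have fin: "finite S" if "S \<subseteq> A" for S using finite_subset[OF that fA] .
  define I where "I = A1 \<inter> A2"
  define X where "X = A1 \<inter> C"
  define Y where "Y = A2 \<inter> C"
  define U where "U = A1 \<union> A2"
  have sI: "strong A R I" unfolding I_def using strong_Int[OF fA fR s1 s2] .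
  have sX: "strong A R X" unfolding X_def using strong_Int[OF fA fR s1 sC] .
  have sY: "strong A R Y" unfolding Y_def using strong_Int[OF fA fR s2 sC] .
  have sZ: "strong A R (A1 \<inter> A2 \<inter> C)" using strong_Int[OF fA fR sI sC] I_def by simp
  have dI: "dd A R I = delta R I" using weakm_dd[OF fA strong_weakm[OF sI]] .
  have d1: "dd A R A1 = delta R A1" using weakm_dd[OF fA strong_weakm[OF s1]] .
  have d2: "dd A R A2 = delta R A2" using weakm_dd[OF fA strong_weakm[OF s2]] .
  have dX: "dd A R X = delta R X" using weakm_dd[OF fA strong_weakm[OF sX]] .
  have dY: "dd A R Y = delta R Y" using weakm_dd[OF fA strong_weakm[OF sY]] .
  have dZ: "dd A R (A1 \<inter> A2 \<inter> C) = delta R (A1 \<inter> A2 \<inter> C)"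
    using weakm_dd[OF fA strong_weakm[OF sZ]] .
  have UA: "U \<subseteq> A" using A1A A2A U_def by auto
  have dU: "dd A R U = delta R A1 + delta R A2 - delta R I"
    using assms(5) d1 d2 dI U_def I_def by simp
  have dUle: "dd A R U \<le> delta R U" using dd_le[OF fA _ UA] by simp
  have cU: "card P + card Q = card (P \<union> Q) + card (P \<inter> Q)" if "finite P" "finite Q" for P Q :: "'a set"
    using card_Un_Int that by blast
  have nocross: "r \<subseteq> A1 \<or> r \<subseteq> A2" if "r \<in> R" "r \<subseteq> A1 \<union> A2" for r
  proof -
    have c1: "card A1 + card A2 = card U + card I" using cU[OF fin[OF A1A] fin[OF A2A]] U_def I_def by simp
    have c2: "int (card A1) + int (card A2) = int (card U) + int (card I)" using c1 by linarith
    have c3: "int (card (Rof R A1)) + int (card (Rof R A2)) = int (card (Rof R A1 \<union> Rof R A2)) + int (card (Rof R I))"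
      using card_Rof_eq[OF fR, of A1 A2, folded I_def] by linarith
    have "card (Rof R U) \<le> card (Rof R A1 \<union> Rof R A2)"
      using dU dUle c2 c3 unfolding delta_def by linarith
    then have "Rof R A1 \<union> Rof R A2 = Rof R U"
      using card_seteq[OF Rof_fin[OF fR] Rof_Un_sub[of R A1 A2, folded U_def]] by simp
    moreover have "r \<in> Rof R U" using that U_def Rof_def by auto
    ultimately show ?thesis unfolding Rof_def by auto
  qed
  have dUeq: "delta R U = delta R A1 + delta R A2 - delta R I"
    using delta_mod[OF fR fin[OF A1A] fin[OF A2A] nocross] U_def I_def by simp
  have wU: "weakm A R U" unfolding weakm_def
  proof (intro conjI allI impI UA)
    fix W assume "U \<subseteq> W" "W \<subseteq> A"
    then have "dd A R U \<le> delta R W" using dd_le[OF fA] by blast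
    then show "delta R U \<le> delta R W" using dU dUeq by simp
  qed
  have XYA: "X \<union> Y \<subseteq> A" using X_def Y_def CA by auto
  obtain W where W: "X \<union> Y \<subseteq> W" "W \<subseteq> A" "dd A R (X \<union> Y) = delta R W"
    using dd_attained[OF fA XYA] by blast
  have "delta R (W \<inter> C) \<le> delta R W"
    using weakm_cut[OF fA fR strong_weakm[OF sC] W(2)] by linarith
  moreover have "delta R (W \<inter> C \<inter> U) \<le> delta R (W \<inter> C)"
    using weakm_cut[OF fA fR wU, of "W \<inter> C"] W(2) by force
  moreover have "W \<inter> C \<inter> U = X \<union> Y" using W(1) X_def Y_def U_def by auto
  ultimately have "delta R (X \<union> Y) \<le> dd A R (X \<union> Y)" using W by simp
  moreover have "dd A R (X \<union> Y) \<le> delta R (X \<union> Y)" using dd_le[OF fA _ XYA] by simp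
  moreover have "delta R (X \<union> Y) + delta R (X \<inter> Y) = delta R X + delta R Y"
  proof (rule delta_mod[OF fR])
    show "finite X" "finite Y" using fin XYA by auto
    fix r assume "r \<in> R" "r \<subseteq> X \<union> Y"
    then show "r \<subseteq> X \<or> r \<subseteq> Y" using nocross[of r] X_def Y_def by auto
  qed
  moreover have "X \<inter> Y = A1 \<inter> A2 \<inter> C" using X_def Y_def by auto
  ultimately show ?thesis using dX dY dZ X_def Y_def by simp
qed

end
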